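(* Let $\mathbf L=\{L_1,\dots,L_n\}$ be a finite multiset of positive rationals, $k\in\mathbb N_{>0}$, and let $(I,f_l,f_u)$ be an admissible restriction. Then $l^\star=\mathcal C(I,f_l,f_u)^{(k')}$, the $k'$-th largest element (with multiplicity) of $\mathcal C(I,f_l,f_u)$, where $k'=k-\sum_{i\in I}(f_l(i)-1)$.
   Context: $m(l)=\sum_{i=1}^n\lfloor L_i/l\rfloor$, $c(l)=\sum_i(\lceil L_i/l\rceil-1)$; $l$ feasible iff $m(l)\ge k$; $l^\star$ is the unique optimal cut length (feasible length minimizing $c$ among feasible lengths; equals the largest feasible length). Candidate multiset: $\mathcal C(I,f_l,f_u)=\biguplus_{i\in I}\{L_i/j: j\in\mathbb N,\ f_l(i)\le j\le f_u(i)\}$ (one occurrence per pair $(i,j)$). A triple $(I,f_l,f_u)$ with $I\subseteq[1..n]$, $f_l,f_u:I\to\mathbb N_{>0}$ is an admissible restriction if (i) for all $i\in I$, $f_l(i)=1$ or $L_i/(f_l(i)-1)$ is infeasible; (ii) for all $i\in I$, $L_i/f_u(i)$ is feasible; (iii) for all $i'\notin I$, $L_{i'}$ is feasible and $L_{i'}\ne l^\star$. $\mathbf A^{(r)}$ denotes the $r$-th largest element of multiset $\mathbf A$ counted with multiplicity. *)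

theory Defs
  imports Complex_Main "HOL-Library.Multiset"
begin

text \<open>Lengths are given as a function L on the index set {1..n}.\<close>

definition pieces :: "(nat \<Rightarrow> rat) \<Rightarrow> nat \<Rightarrow> rat \<Rightarrow> int" where
  "pieces L n l = (\<Sum>i\<in>{1..n}. \<lfloor>L i / l\<rfloor>)"

definition cuts :: "(nat \<Rightarrow> rat) \<Rightarrow> nat \<Rightarrow> rat \<Rightarrow> int" where
  "cuts L n l = (\<Sum>i\<in>{1..n}. \<lceil>L i / l\<rceil> - 1)"

definition feasible :: "(nat \<Rightarrow> rat) \<Rightarrow> nat \<Rightarrow> nat \<Rightarrow> rat \<Rightarrow> bool" where
  "feasible L n k l \<longleftrightarrow> l > 0 \<and> pieces L n l \<ge> int k"

definition optimal :: "(nat \<Rightarrow> rat) \<Rightarrow> nat \<Rightarrow> nat \<Rightarrow> rat \<Rightarrow> bool" where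
  "optimal L n k l \<longleftrightarrow> feasible L n k l \<and>
     (\<forall>l'. feasible L n k l' \<longrightarrow> cuts L n l \<le> cuts L n l')"

definition lstar :: "(nat \<Rightarrow> rat) \<Rightarrow> nat \<Rightarrow> nat \<Rightarrow> rat" where
  "lstar L n k = (THE l. optimal L n k l)"

definition candidates :: "(nat \<Rightarrow> rat) \<Rightarrow> nat set \<Rightarrow> (nat \<Rightarrow> nat) \<Rightarrow> (nat \<Rightarrow> nat) \<Rightarrow> rat multiset" where
  "candidates L I fl fu =
     (\<Sum>i\<in>I. image_mset (\<lambda>j. L i / of_nat j) (mset_set {fl i..fu i}))"

definition kth_largest :: "rat multiset \<Rightarrow> int \<Rightarrow> rat" where
  "kth_largest A r =
     (if 1 \<le> r \<and> r \<le> int (size A)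
      then rev (sorted_list_of_multiset A) ! (nat r - 1) else undefined)"

definition admissible :: "(nat \<Rightarrow> rat) \<Rightarrow> nat \<Rightarrow> nat \<Rightarrow> nat set \<Rightarrow> (nat \<Rightarrow> nat) \<Rightarrow> (nat \<Rightarrow> nat) \<Rightarrow> bool" where
  "admissible L n k I fl fu \<longleftrightarrow>
     I \<subseteq> {1..n} \<and>
     (\<forall>i\<in>I. fl i > 0 \<and> fu i > 0) \<and>
     (\<forall>i\<in>I. fl i = 1 \<or> \<not> feasible L n k (L i / of_nat (fl i - 1))) \<and>
     (\<forall>i\<in>I. feasible L n k (L i / of_nat (fu i))) \<and>
     (\<forall>i'\<in>{1..n} - I. feasible L n k (L i') \<and> L i' \<noteq> lstar L n k)"

end

theory Submission
  imports Defs
begin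


lemma floor_nonneg:
  assumes pos: "\<forall>i\<in>{1..n}. L i > 0" and "i \<in> {1..n}" and "(l::rat) > 0"
  shows "0 \<le> \<lfloor>L i / l\<rfloor>"
proof -
  have "L i > 0" using pos assms(2) by auto
  thus ?thesis using assms(3) by simp
qed

lemma pieces_mono:
  assumes pos: "\<forall>i\<in>{1..n}. L i > 0" and l1: "0 < l1" and le: "l1 \<le> l2"
  shows "pieces L n l2 \<le> pieces L n l1"
  unfolding pieces_def
proof (rule sum_mono)
  fix i assume "i \<in> {1..n}"
  hence Li: "L i > 0" using pos by auto
  have "L i / l2 \<le> L i / l1" by (rule divide_left_mono) (use Li l1 le in auto)
  thus "\<lfloor>L i / l2\<rfloor> \<le> \<lfloor>L i / l1\<rfloor>" by (rule floor_mono)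
qed

lemma feasible_mono:
  assumes pos: "\<forall>i\<in>{1..n}. L i > 0" and "feasible L n k l2" "0 < l1" "l1 \<le> l2"
  shows "feasible L n k l1"
  using pieces_mono[OF pos assms(3,4)] assms(2,3) by (auto simp: feasible_def)

lemma cand_bound:
  assumes pos: "\<forall>i\<in>{1..n}. L i > 0" and k: "k > 0" and fl: "feasible L n k l"
  shows "\<exists>c\<in>(\<lambda>(i,j). L i / of_nat j) ` ({1..n} \<times> {1..k}). feasible L n k c \<and> l \<le> c"
proof -
  have l0: "l > 0" using fl by (simp add: feasible_def)
  define q where "q i = \<lfloor>L i / l\<rfloor>" for i
  have q0: "q i \<ge> 0" if "i \<in> {1..n}" for i using floor_nonneg[OF pos that l0] by (simp add: q_def)
  define S where "S = {i\<in>{1..n}. q i \<ge> 1}"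
  define d where "d i = min (nat (q i)) k" for i
  have finS: "finite S" by (simp add: S_def)
  have pk: "pieces L n l \<ge> int k" using fl by (simp add: feasible_def)
  have Sne: "S \<noteq> {}"
  proof
    assume "S = {}"
    hence "q i \<le> 0" if "i \<in> {1..n}" for i using that by (auto simp: S_def)
    hence "pieces L n l \<le> 0" unfolding pieces_def q_def[symmetric] by (auto intro!: sum_nonpos)
    with pk k show False by simp
  qed
  have dS: "d i \<in> {1..k}" if "i \<in> S" for i using that k by (auto simp: S_def d_def)
  have ld: "l \<le> L i / of_nat (d i)" if "i \<in> S" for i
  proof -
    have "int (d i) \<le> q i" using that by (auto simp: d_def S_def)
    hence "of_nat (d i) * l \<le> L i" using l0 unfolding q_def by (simp add: le_floor_iff pos_le_divide_eq)
    moreover have "of_nat (d i) > (0::rat)" using dS[OF that] by simp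
    ultimately show ?thesis by (simp add: pos_le_divide_eq mult.commute)
  qed
  define c where "c = Min ((\<lambda>i. L i / of_nat (d i)) ` S)"
  have cin: "c \<in> (\<lambda>i. L i / of_nat (d i)) ` S" unfolding c_def using finS Sne by (intro Min_in) auto
  then obtain i0 where i0: "i0 \<in> S" "c = L i0 / of_nat (d i0)" by auto
  have cle: "c \<le> L i / of_nat (d i)" if "i \<in> S" for i unfolding c_def using finS that by (intro Min_le) auto
  have lc: "l \<le> c" using ld i0 by simp
  have c0: "c > 0" using lc l0 by simp
  have cC: "c \<in> (\<lambda>(i,j). L i / of_nat j) ` ({1..n} \<times> {1..k})"
    using i0 dS[OF i0(1)] by (auto simp: S_def intro!: image_eqI[where x="(i0, d i0)"])
  have fd: "int (d i) \<le> \<lfloor>L i / c\<rfloor>" if "i \<in> S" for i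
  proof -
    have "of_nat (d i) > (0::rat)" using dS[OF that] by simp
    hence "of_nat (d i) * c \<le> L i" using cle[OF that] by (simp add: pos_le_divide_eq mult.commute)
    thus ?thesis using c0 by (simp add: le_floor_iff pos_le_divide_eq)
  qed
  have f0: "0 \<le> \<lfloor>L i / c\<rfloor>" if "i \<in> {1..n}" for i using floor_nonneg[OF pos that c0] .
  have "(\<Sum>i\<in>S. int (d i)) \<le> (\<Sum>i\<in>S. \<lfloor>L i / c\<rfloor>)" by (rule sum_mono) (rule fd)
  also have "\<dots> \<le> pieces L n c" unfolding pieces_def
    by (rule sum_mono2) (auto simp: S_def intro: f0 simp del: zero_le_floor)
  finally have A: "(\<Sum>i\<in>S. int (d i)) \<le> pieces L n c" .
  have B: "int k \<le> (\<Sum>i\<in>S. int (d i))"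
  proof (cases "\<exists>i\<in>S. q i \<ge> int k")
    case True
    then obtain i where i: "i \<in> S" "q i \<ge> int k" by auto
    have "k \<le> nat (q i)" using i(2) by (metis nat_int nat_mono)
    hence "d i = k" by (simp add: d_def)
    hence "int k = int (d i)" by simp
    also have "\<dots> \<le> (\<Sum>i\<in>S. int (d i))" using finS i(1) by (intro member_le_sum) auto
    finally show ?thesis .
  next
    case False
    have "int (d i) = q i" if "i \<in> S" for i
    proof -
      have "q i < int k" "q i \<ge> 1" using False that by (auto simp: S_def)
      hence "nat (q i) \<le> k" "int (nat (q i)) = q i" by linarith+
      thus ?thesis by (simp add: d_def)
    qed
    hence "(\<Sum>i\<in>S. int (d i)) = (\<Sum>i\<in>S. q i)" by simp
    also have "\<dots> = (\<Sum>i\<in>{1..n}. q i)"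
    proof (rule sum.mono_neutral_left)
      show "\<forall>i\<in>{1..n} - S. q i = 0"
      proof
        fix i assume "i \<in> {1..n} - S"
        thus "q i = 0" using q0[of i] by (auto simp: S_def)
      qed
    qed (auto simp: S_def)
    also have "\<dots> = pieces L n l" by (simp add: pieces_def q_def)
    finally show ?thesis using pk by simp
  qed
  have "feasible L n k c" using A B c0 by (simp add: feasible_def)
  thus ?thesis using cC lc by blast
qed

lemma exists_max:
  assumes n: "n \<ge> 1" and pos: "\<forall>i\<in>{1..n}. L i > 0" and k: "k > 0"
  shows "\<exists>M. feasible L n k M \<and> (\<forall>l. feasible L n k l \<longrightarrow> l \<le> M)"
proof -
  define C where "C = (\<lambda>(i,j). L i / of_nat j) ` ({1..n} \<times> {1..k})"
  define F where "F = {c\<in>C. feasible L n k c}"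
  have finF: "finite F" by (simp add: F_def C_def)
  have L1: "L 1 > 0" using pos n by simp
  have "int k = \<lfloor>L 1 / (L 1 / of_nat k)\<rfloor>" using L1 k by simp
  also have "\<dots> \<le> pieces L n (L 1 / of_nat k)" unfolding pieces_def
    using n pos k L1 by (intro member_le_sum floor_nonneg[OF pos]) auto
  finally have "feasible L n k (L 1 / of_nat k)" using L1 k by (simp add: feasible_def)
  then obtain c0 where "c0 \<in> C" "feasible L n k c0"
    using cand_bound[OF pos k] unfolding C_def by blast
  hence Fne: "F \<noteq> {}" by (auto simp: F_def)
  define M where "M = Max F"
  have "M \<in> F" unfolding M_def using finF Fne by (rule Max_in)
  hence fM: "feasible L n k M" by (simp add: F_def)
  have "l \<le> M" if fl: "feasible L n k l" for l
  proof -
    obtain c where "c \<in> C" "feasible L n k c" "l \<le> c"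
      using cand_bound[OF pos k fl] unfolding C_def by blast
    moreover have "c \<le> M" unfolding M_def using finF \<open>c \<in> C\<close> \<open>feasible L n k c\<close>
      by (intro Max_ge) (auto simp: F_def)
    ultimately show ?thesis by simp
  qed
  thus ?thesis using fM by blast
qed

lemma cuts_lt:
  assumes n: "n \<ge> 1" and pos: "\<forall>i\<in>{1..n}. L i > 0" and k: "k > 0"
    and fM: "feasible L n k M" and mx: "\<forall>l. feasible L n k l \<longrightarrow> l \<le> M"
  shows "cuts L n M < int k"
proof (rule ccontr)
  assume "\<not> ?thesis" hence ck: "int k \<le> cuts L n M" by simp
  have M0: "M > 0" using fM by (simp add: feasible_def)
  define e where "e i = \<lceil>L i / M\<rceil> - 1" for i
  define g where "g i = (if e i \<ge> 1 then L i / of_int (e i) else M + 1)" for i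
  define l where "l = Min (g ` {1..n})"
  have gM: "M < g i" if "i \<in> {1..n}" for i
  proof (cases "e i \<ge> 1")
    case True
    have "of_int (e i) < L i / M" unfolding e_def
      using ceiling_correct[of "L i / M"] by simp
    hence "of_int (e i) * M < L i" using M0 by (simp add: pos_less_divide_eq)
    moreover have "(0::rat) < of_int (e i)" using True by simp
    ultimately show ?thesis using True by (simp add: g_def pos_less_divide_eq mult.commute)
  next
    case False thus ?thesis by (simp add: g_def)
  qed
  have "l \<in> g ` {1..n}" unfolding l_def using n by (intro Min_in) auto
  hence lM: "M < l" using gM by auto
  have lg: "l \<le> g i" if "i \<in> {1..n}" for i unfolding l_def using that by (intro Min_le) auto
  have el: "e i \<le> \<lfloor>L i / l\<rfloor>" if "i \<in> {1..n}" for i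
  proof (cases "e i \<ge> 1")
    case True
    have "(0::rat) < of_int (e i)" using True by simp
    hence "of_int (e i) * l \<le> L i" using lg[OF that] True by (simp add: g_def pos_le_divide_eq mult.commute)
    thus ?thesis using lM M0 by (simp add: le_floor_iff pos_le_divide_eq)
  next
    case False
    hence "e i \<le> 0" by simp
    moreover have "0 \<le> \<lfloor>L i / l\<rfloor>" by (rule floor_nonneg[OF pos that]) (use lM M0 in simp)
    ultimately show ?thesis by linarith
  qed
  have "cuts L n M \<le> pieces L n l" unfolding cuts_def pieces_def e_def[symmetric]
    by (rule sum_mono) (rule el)
  hence "feasible L n k l" using ck lM M0 by (simp add: feasible_def)
  with mx lM show False by force
qed

lemma lstar_eq:
  assumes n: "n \<ge> 1" and pos: "\<forall>i\<in>{1..n}. L i > 0" and k: "k > 0"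
    and fM: "feasible L n k M" and mx: "\<forall>l. feasible L n k l \<longrightarrow> l \<le> M"
  shows "lstar L n k = M"
proof -
  have M0: "M > 0" using fM by (simp add: feasible_def)
  have opt: "optimal L n k M"
    unfolding optimal_def
  proof (intro conjI allI impI fM)
    fix l assume fl: "feasible L n k l"
    hence l0: "l > 0" "l \<le> M" using mx by (auto simp: feasible_def)
    show "cuts L n M \<le> cuts L n l" unfolding cuts_def
    proof (rule sum_mono)
      fix i assume "i \<in> {1..n}"
      hence Li: "L i > 0" using pos by auto
      have "L i / M \<le> L i / l" by (rule divide_left_mono) (use Li l0 in auto)
      hence "\<lceil>L i / M\<rceil> \<le> \<lceil>L i / l\<rceil>" by (rule ceiling_mono)
      thus "\<lceil>L i / M\<rceil> - 1 \<le> \<lceil>L i / l\<rceil> - 1" by simp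
    qed
  qed
  have uniq: "l = M" if ol: "optimal L n k l" for l
  proof (rule ccontr)
    assume ne: "l \<noteq> M"
    have fl: "feasible L n k l" using ol by (simp add: optimal_def)
    hence l0: "l > 0" "l < M" using mx ne by (auto simp: feasible_def order.strict_iff_order)
    have "pieces L n M \<le> cuts L n l" unfolding cuts_def pieces_def
    proof (rule sum_mono)
      fix i assume "i \<in> {1..n}"
      hence Li: "L i > 0" using pos by auto
      have "L i / M < L i / l" by (rule divide_strict_left_mono) (use Li l0 in auto)
      moreover have "of_int \<lfloor>L i / M\<rfloor> \<le> L i / M" by (rule of_int_floor_le)
      moreover have "L i / l \<le> of_int \<lceil>L i / l\<rceil>" by (rule le_of_int_ceiling)
      ultimately have "(of_int \<lfloor>L i / M\<rfloor> :: rat) < of_int \<lceil>L i / l\<rceil>" by linarith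
      hence "\<lfloor>L i / M\<rfloor> < \<lceil>L i / l\<rceil>" by (simp only: of_int_less_iff)
      thus "\<lfloor>L i / M\<rfloor> \<le> \<lceil>L i / l\<rceil> - 1" by simp
    qed
    moreover have "pieces L n M \<ge> int k" using fM by (simp add: feasible_def)
    moreover have "cuts L n l \<le> cuts L n M" using ol fM by (simp add: optimal_def)
    moreover have "cuts L n M < int k" by (rule cuts_lt[OF n pos k fM mx])
    ultimately show False by simp
  qed
  show ?thesis unfolding lstar_def using opt uniq by (rule the_equality)
qed



lemma sorted_nth_eq:
  fixes xs :: "rat list"
  assumes s: "sorted xs" and lo: "length (filter (\<lambda>y. y < x) xs) \<le> i"
    and hi: "i + length (filter (\<lambda>y. y > x) xs) < length xs"
  shows "xs ! i = x"
proof (rule ccontr)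
  assume ne: "xs ! i \<noteq> x"
  have il: "i < length xs" using hi by simp
  have split: "length (filter P xs) = length (filter P (take (Suc i) xs)) + length (filter P (drop (Suc i) xs))"
    for P by (metis append_take_drop_id filter_append length_append)
  have split2: "length (filter P xs) = length (filter P (take i xs)) + length (filter P (drop i xs))"
    for P by (metis append_take_drop_id filter_append length_append)
  show False
  proof (cases "xs ! i < x")
    case True
    have "\<forall>y\<in>set (take (Suc i) xs). y < x"
    proof
      fix y assume "y \<in> set (take (Suc i) xs)"
      then obtain j where j: "j < length (take (Suc i) xs)" "y = take (Suc i) xs ! j"
        by (auto simp: in_set_conv_nth)
      hence "j \<le> i" "y = xs ! j" by auto
      hence "y \<le> xs ! i" using sorted_nth_mono[OF s _ il] by simp
      thus "y < x" using True by simp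
    qed
    hence "filter (\<lambda>y. y < x) (take (Suc i) xs) = take (Suc i) xs" by simp
    hence "length (filter (\<lambda>y. y < x) (take (Suc i) xs)) = Suc i" using il by simp
    thus False using split[of "\<lambda>y. y < x"] lo by simp
  next
    case False
    hence gt: "xs ! i > x" using ne by simp
    have "\<forall>y\<in>set (drop i xs). y > x"
    proof
      fix y assume "y \<in> set (drop i xs)"
      then obtain j where j: "j < length (drop i xs)" "y = drop i xs ! j"
        by (auto simp: in_set_conv_nth)
      hence "y = xs ! (i + j)" "i + j < length xs" by auto
      hence "xs ! i \<le> y" using sorted_nth_mono[OF s, of i "i+j"] by simp
      thus "y > x" using gt by simp
    qed
    hence "filter (\<lambda>y. y > x) (drop i xs) = drop i xs" by simp
    hence "length (filter (\<lambda>y. y > x) (drop i xs)) = length xs - i" by simp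
    thus False using split2[of "\<lambda>y. y > x"] hi by simp
  qed
qed

lemma kth_largest_eq:
  assumes lo: "size (filter_mset (\<lambda>y. y > x) A) < r"
    and hi: "r \<le> size (filter_mset (\<lambda>y. y \<ge> x) A)"
  shows "kth_largest A (int r) = x"
proof -
  define xs where "xs = sorted_list_of_multiset A"
  have A: "A = mset xs" by (simp add: xs_def)
  have sz: "size (filter_mset P A) = length (filter P xs)" for P
    unfolding A by (metis mset_filter size_mset)
  have len: "size A = length xs" by (simp add: A)
  have s: "sorted xs" by (simp add: xs_def)
  have c: "length (filter (\<lambda>y. x \<le> y) xs) + length (filter (\<lambda>y. y < x) xs) = length xs"
    using sum_length_filter_compl[of "\<lambda>y. x \<le> y" xs] by (simp add: not_le)
  have r1: "1 \<le> r" using lo by simp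
  have rl: "r \<le> length xs" using hi sz[of "\<lambda>y. y \<ge> x"] c by simp
  have "rev xs ! (r - 1) = xs ! (length xs - r)"
    using r1 rl by (simp add: rev_nth Suc_diff_le)
  also have "\<dots> = x"
    by (rule sorted_nth_eq[OF s]) (use c hi lo sz r1 rl in auto)
  finally show ?thesis unfolding kth_largest_def using r1 rl len by (simp add: xs_def)
qed

lemma size_filter_cand:
  assumes "finite I"
  shows "size (filter_mset P (candidates L I fl fu)) = (\<Sum>i\<in>I. card {j\<in>{fl i..fu i}. P (L i / of_nat j)})"
  unfolding candidates_def using assms
proof (induction I rule: finite_induct)
  case empty then show ?case by simp
next
  case (insert a F)
  then show ?case by (simp add: filter_mset_image_mset filter_mset_mset_set)
qed

lemma card_le_interval:
  fixes a b :: nat and m :: int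
  assumes "a \<ge> 1" "int a - 1 \<le> m" "m \<le> int b"
  shows "int (card {j\<in>{a..b}. int j \<le> m}) = m - (int a - 1)"
proof -
  have "{j\<in>{a..b}. int j \<le> m} = {a..nat m}" using assms by auto
  thus ?thesis using assms by simp
qed



theorem mainTheorem10:
  fixes L :: "nat \<Rightarrow> rat" and n k :: nat and I :: "nat set" and fl fu :: "nat \<Rightarrow> nat"
  assumes "n \<ge> 1"
    and "\<forall>i\<in>{1..n}. L i > 0"
    and "k > 0"
    and "admissible L n k I fl fu"
  shows "lstar L n k =
           kth_largest (candidates L I fl fu) (int k - (\<Sum>i\<in>I. (int (fl i) - 1)))"
proof -
  note n = assms(1) and pos = assms(2) and k = assms(3)
  obtain M where fM: "feasible L n k M" and mx: "\<forall>l. feasible L n k l \<longrightarrow> l \<le> M"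
    using exists_max[OF n pos k] by blast
  have ls: "lstar L n k = M" by (rule lstar_eq[OF n pos k fM mx])
  have cM: "cuts L n M < int k" by (rule cuts_lt[OF n pos k fM mx])
  have pM: "int k \<le> pieces L n M" using fM by (simp add: feasible_def)
  have M0: "M > 0" using fM by (simp add: feasible_def)
  note adm = assms(4)[unfolded admissible_def]
  note IS = adm[THEN conjunct1]
  note flu = adm[THEN conjunct2, THEN conjunct1]
  note inf = adm[THEN conjunct2, THEN conjunct2, THEN conjunct1]
  note fuf = adm[THEN conjunct2, THEN conjunct2, THEN conjunct2, THEN conjunct1]
  note out = adm[THEN conjunct2, THEN conjunct2, THEN conjunct2, THEN conjunct2]
  have finI: "finite I" using IS finite_subset by blast
  define F where "F i = \<lfloor>L i / M\<rfloor>" for i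
  define G where "G i = \<lceil>L i / M\<rceil> - 1" for i
  have Fge: "int (fl i) - 1 \<le> F i" and Gge: "int (fl i) - 1 \<le> G i" if "i \<in> I" for i
  proof -
    have Li: "L i > 0" using pos IS that by auto
    have "of_int (int (fl i) - 1) < L i / M"
    proof (cases "fl i = 1")
      case True thus ?thesis using Li M0 by simp
    next
      case False
      hence f2: "fl i \<ge> 2" using flu that by auto
      hence nf: "\<not> feasible L n k (L i / of_nat (fl i - 1))" using inf that by auto
      have p: "L i / of_nat (fl i - 1) > 0" using Li f2 by simp
      have "\<not> L i / of_nat (fl i - 1) \<le> M"
        using nf feasible_mono[OF pos fM p] by blast
      hence "M < L i / of_nat (fl i - 1)" by (simp only: not_le)
      hence h: "M * of_nat (fl i - 1) < L i" using f2 by (simp add: pos_less_divide_eq)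
      have e: "of_int (int (fl i) - 1) = (of_nat (fl i - 1) :: rat)" using f2 by (simp add: of_nat_diff)
      have "of_nat (fl i - 1) < L i / M \<longleftrightarrow> of_nat (fl i - 1) * M < L i"
        by (rule pos_less_divide_eq[OF M0])
      thus ?thesis unfolding e using h by (simp add: mult.commute)
    qed
    hence a: "int (fl i) - 1 < \<lceil>L i / M\<rceil>" by (simp only: less_ceiling_iff)
    have b: "int (fl i) - 1 \<le> \<lfloor>L i / M\<rfloor>" using \<open>of_int (int (fl i) - 1) < L i / M\<close>
      by (simp add: le_floor_iff)
    show "int (fl i) - 1 \<le> F i" using b by (simp add: F_def)
    show "int (fl i) - 1 \<le> G i" using a by (simp add: G_def)
  qed
  have Fle: "F i \<le> int (fu i)" and Gle: "G i \<le> int (fu i)" if "i \<in> I" for i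
  proof -
    have Li: "L i > 0" using pos IS that by auto
    have fu0: "fu i > 0" using flu that by auto
    have "L i / of_nat (fu i) \<le> M" using mx fuf that by blast
    hence "L i \<le> M * of_nat (fu i)" using fu0 by (simp add: divide_le_eq mult.commute)
    hence le: "L i / M \<le> of_int (int (fu i))" using M0 by (simp add: divide_le_eq mult.commute)
    hence "\<lceil>L i / M\<rceil> \<le> int (fu i)" by (simp only: ceiling_le_iff)
    moreover have "\<lfloor>L i / M\<rfloor> \<le> \<lceil>L i / M\<rceil>" by (rule floor_le_ceiling)
    ultimately have "\<lfloor>L i / M\<rfloor> \<le> int (fu i)" "\<lceil>L i / M\<rceil> - 1 \<le> int (fu i)" by linarith+
    thus "F i \<le> int (fu i)" "G i \<le> int (fu i)" by (simp_all only: F_def G_def)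
  qed
  have Fout: "F i = 0" and Gout: "G i = 0" if "i \<in> {1..n} - I" for i
  proof -
    have Li: "L i > 0" using pos that by auto
    have "L i \<le> M" using out mx that by blast
    moreover have "L i \<noteq> M" using out that ls by auto
    ultimately have "L i < M" by simp
    hence "L i / M < 1" using M0 by simp
    moreover have "0 < L i / M" using Li M0 by simp
    ultimately show "F i = 0" "G i = 0" by (simp_all add: F_def G_def floor_eq_iff ceiling_eq_iff)
  qed
  have pI: "pieces L n M = (\<Sum>i\<in>I. F i)" unfolding pieces_def F_def[symmetric]
    by (rule sum.mono_neutral_right) (use IS Fout in auto)
  have cI: "cuts L n M = (\<Sum>i\<in>I. G i)" unfolding cuts_def G_def[symmetric]
    by (rule sum.mono_neutral_right) (use IS Gout in auto)
  define A where "A = candidates L I fl fu"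
  define k' where "k' = int k - (\<Sum>i\<in>I. (int (fl i) - 1))"
  have geq: "{j\<in>{fl i..fu i}. M \<le> L i / of_nat j} = {j\<in>{fl i..fu i}. int j \<le> F i}" if "i \<in> I" for i
  proof -
    have "M \<le> L i / of_nat j \<longleftrightarrow> int j \<le> F i" if "j \<ge> fl i" for j
    proof -
      have "j > 0" using flu \<open>i \<in> I\<close> that by auto
      hence "M \<le> L i / of_nat j \<longleftrightarrow> of_nat j * M \<le> L i" by (simp add: pos_le_divide_eq mult.commute)
      also have "\<dots> \<longleftrightarrow> of_int (int j) \<le> L i / M" using M0 by (simp add: pos_le_divide_eq)
      also have "\<dots> \<longleftrightarrow> int j \<le> F i" by (simp only: F_def le_floor_iff)
      finally show ?thesis .
    qed
    thus ?thesis by auto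
  qed
  have gtq: "{j\<in>{fl i..fu i}. M < L i / of_nat j} = {j\<in>{fl i..fu i}. int j \<le> G i}" if "i \<in> I" for i
  proof -
    have "M < L i / of_nat j \<longleftrightarrow> int j \<le> G i" if "j \<ge> fl i" for j
    proof -
      have "j > 0" using flu \<open>i \<in> I\<close> that by auto
      hence "M < L i / of_nat j \<longleftrightarrow> of_nat j * M < L i" by (simp add: pos_less_divide_eq mult.commute)
      also have "\<dots> \<longleftrightarrow> of_int (int j) < L i / M" using M0 by (simp add: pos_less_divide_eq)
      also have "\<dots> \<longleftrightarrow> int j < \<lceil>L i / M\<rceil>" by (simp only: less_ceiling_iff)
      also have "\<dots> \<longleftrightarrow> int j \<le> G i" by (simp add: G_def)
      finally show ?thesis .
    qed
    thus ?thesis by auto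
  qed
  have flpos: "fl i \<ge> 1" if "i \<in> I" for i using flu that by auto
  have "int (size (filter_mset (\<lambda>y. y \<ge> M) A)) = (\<Sum>i\<in>I. int (card {j\<in>{fl i..fu i}. M \<le> L i / of_nat j}))"
    unfolding A_def size_filter_cand[OF finI] by simp
  also have "\<dots> = (\<Sum>i\<in>I. F i - (int (fl i) - 1))"
  proof (rule sum.cong[OF refl])
    fix i assume i: "i \<in> I"
    show "int (card {j\<in>{fl i..fu i}. M \<le> L i / of_nat j}) = F i - (int (fl i) - 1)"
      unfolding geq[OF i] by (rule card_le_interval[OF flpos[OF i] Fge[OF i] Fle[OF i]])
  qed
  also have "\<dots> = pieces L n M - (\<Sum>i\<in>I. (int (fl i) - 1))" by (simp add: pI sum_subtractf)
  finally have hi: "k' \<le> int (size (filter_mset (\<lambda>y. y \<ge> M) A))" using pM by (simp add: k'_def)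
  have "int (size (filter_mset (\<lambda>y. y > M) A)) = (\<Sum>i\<in>I. int (card {j\<in>{fl i..fu i}. M < L i / of_nat j}))"
    unfolding A_def size_filter_cand[OF finI] by simp
  also have "\<dots> = (\<Sum>i\<in>I. G i - (int (fl i) - 1))"
  proof (rule sum.cong[OF refl])
    fix i assume i: "i \<in> I"
    show "int (card {j\<in>{fl i..fu i}. M < L i / of_nat j}) = G i - (int (fl i) - 1)"
      unfolding gtq[OF i] by (rule card_le_interval[OF flpos[OF i] Gge[OF i] Gle[OF i]])
  qed
  also have "\<dots> = cuts L n M - (\<Sum>i\<in>I. (int (fl i) - 1))" by (simp add: cI sum_subtractf)
  finally have lo: "int (size (filter_mset (\<lambda>y. y > M) A)) < k'" using cM by (simp add: k'_def)
  have k'0: "k' \<ge> 0" using lo by simp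
  have "kth_largest A (int (nat k')) = M"
    by (rule kth_largest_eq) (use lo hi k'0 in linarith)+
  thus ?thesis using ls k'0 by (simp add: A_def k'_def)
qed

end
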